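(* Let $\mathcal A$ be an ordered normed algebra with unit $e$ whose algebra cone $\mathcal A^+$ is normal. Then there do not exist $a,b\in\mathcal A$, with at least one of $a,b$ positive, such that $ab-ba\geq e$.
   Context: A normed algebra $\mathcal A$ (real or complex, with submultiplicative norm) with unit $e$. A cone is a nonempty subset $\mathcal A^+\subseteq\mathcal A$ with $\mathcal A^++\mathcal A^+\subseteq\mathcal A^+$, $\lambda\mathcal A^+\subseteq\mathcal A^+$ for all $\lambda\geq 0$, and $\mathcal A^+\cap(-\mathcal A^+)=\{0\}$; it induces the partial order $a\leq b \iff b-a\in\mathcal A^+$. Elements of $\mathcal A^+$ are called positive. The cone is an algebra cone if $\mathcal A^+\cdot\mathcal A^+\subseteq\mathcal A^+$ and $e\in\mathcal A^+$; then $\mathcal A$ is called an ordered normed algebra. The cone is normal if there is a constant $\alpha>0$ such that $0\leq x\leq y$ implies $\|x\|\leq\alpha\|y\|$. *)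

theory Defs
  imports Main "HOL.Real_Vector_Spaces"
begin

text \<open>A cone in a (real or complex) normed algebra, viewed as a real vector space
  (complex algebras are in particular real algebras, and the cone axioms only use
  nonnegative real scalars).\<close>
definition cone :: "'a::real_vector set \<Rightarrow> bool" where
  "cone P \<longleftrightarrow> P \<noteq> {} \<and> (\<forall>x\<in>P. \<forall>y\<in>P. x + y \<in> P)
     \<and> (\<forall>x\<in>P. \<forall>c::real. c \<ge> 0 \<longrightarrow> c *\<^sub>R x \<in> P)
     \<and> P \<inter> uminus ` P = {0}"

definition algebra_cone :: "'a::real_algebra_1 set \<Rightarrow> bool" where
  "algebra_cone P \<longleftrightarrow> cone P \<and> (\<forall>x\<in>P. \<forall>y\<in>P. x * y \<in> P) \<and> 1 \<in> P"

definition cone_le :: "'a::real_vector set \<Rightarrow> 'a \<Rightarrow> 'a \<Rightarrow> bool" where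
  "cone_le P a b \<longleftrightarrow> b - a \<in> P"

definition normal_cone :: "'a::real_normed_vector set \<Rightarrow> bool" where
  "normal_cone P \<longleftrightarrow> (\<exists>\<alpha>>0. \<forall>x y. cone_le P 0 x \<and> cone_le P x y \<longrightarrow> norm x \<le> \<alpha> * norm y)"

end

theory Submission
  imports Defs
begin

lemma key:
  fixes P :: "'a::{real_normed_algebra, real_algebra_1} set"
  assumes ac: "algebra_cone P" and nc: "normal_cone P"
    and xP: "x \<in> P" and c: "x*y - y*x - 1 \<in> P"
  shows False
proof -
  have add: "\<And>u v. u \<in> P \<Longrightarrow> v \<in> P \<Longrightarrow> u + v \<in> P"
    and sc: "\<And>u r. u \<in> P \<Longrightarrow> r \<ge> 0 \<Longrightarrow> r *\<^sub>R u \<in> P"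
    and mul: "\<And>u v. u \<in> P \<Longrightarrow> v \<in> P \<Longrightarrow> u * v \<in> P"
    and one: "1 \<in> P"
    using ac unfolding algebra_cone_def cone_def by auto
  have pw: "x ^ n \<in> P" for n
    by (induction n) (auto intro: mul xP one)
  define D where "D n = x^n*y - y*x^n" for n
  have ind: "D (Suc n) - real (Suc n) *\<^sub>R x^n \<in> P" for n
  proof (induction n)
    case 0 then show ?case using c by (simp add: D_def)
  next
    case (Suc n)
    have e: "D (Suc (Suc n)) - real (Suc (Suc n)) *\<^sub>R x^(Suc n)
      = x * (D (Suc n) - real (Suc n) *\<^sub>R x^n) + (x*y - y*x - 1) * x^(Suc n)"
      proof -
      have "real (Suc (Suc n)) *\<^sub>R x^(Suc n) = x^(Suc n) + real (Suc n) *\<^sub>R x^(Suc n)"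
        by (simp only: of_nat_Suc scaleR_add_left scaleR_one add.commute)
      then show ?thesis by (simp add: D_def algebra_simps)
    qed
    show ?case unfolding e using Suc c xP pw[of "Suc n"] by (intro add mul) auto
  qed
  obtain \<alpha> where a0: "\<alpha> > 0" and al: "\<And>u v. cone_le P 0 u \<and> cone_le P u v \<Longrightarrow> norm u \<le> \<alpha> * norm v"
    using nc unfolding normal_cone_def by blast
  define N where "N n = norm (x^n)" for n
  define K where "K = 2 * \<alpha> * norm y"
  have K0: "K \<ge> 0" using a0 by (simp add: K_def)
  have b1: "real (Suc n) * N n \<le> K * N (Suc n)" for n
  proof -
    have "norm (real (Suc n) *\<^sub>R x^n) \<le> \<alpha> * norm (D (Suc n))"
      using al[of "real (Suc n) *\<^sub>R x^n" "D (Suc n)"] ind[of n] pw[of n] sc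
      unfolding cone_le_def by simp
    moreover have "norm (D (Suc n)) \<le> 2 * norm y * N (Suc n)"
    proof -
      have "norm (D (Suc n)) \<le> norm (x^Suc n * y) + norm (y * x^Suc n)"
        unfolding D_def by (rule norm_triangle_ineq4)
      also have "\<dots> \<le> N (Suc n) * norm y + norm y * N (Suc n)"
        unfolding N_def by (intro add_mono norm_mult_ineq)
      finally show ?thesis by simp
    qed
    then have "\<alpha> * norm (D (Suc n)) \<le> \<alpha> * (2 * norm y * N (Suc n))"
      using a0 by (intro mult_left_mono) auto
    ultimately have "real (Suc n) * N n \<le> \<alpha> * (2 * norm y * N (Suc n))"
      unfolding N_def by simp
    then show ?thesis by (simp add: K_def algebra_simps)
  qed
  have b2: "N (Suc n) \<le> norm x * N n" for n
    unfolding N_def by (simp add: norm_mult_ineq)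
  obtain m :: nat where m: "real m > K * norm x" using reals_Archimedean2 by blast
  have Nm: "N m = 0"
  proof -
    have "real (Suc m) * N m \<le> K * (norm x * N m)"
      using b1[of m] mult_left_mono[OF b2[of m] K0] by linarith
    moreover have "N m \<ge> 0" by (simp add: N_def)
    moreover have "K * norm x * N m \<le> real m * N m"
      using m \<open>N m \<ge> 0\<close> by (intro mult_right_mono) auto
    ultimately have "real (Suc m) * N m \<le> real m * N m" by (simp add: mult.assoc)
    then show ?thesis using \<open>N m \<ge> 0\<close> by (simp add: algebra_simps)
  qed
  have down: "N (m - k) = 0" for k
  proof (induction k)
    case 0 then show ?case using Nm by simp
  next
    case (Suc k)
    show ?case
    proof (cases "m - k = 0")
      case True then show ?thesis using Suc by simp
    next
      case False
      then have e: "m - k = Suc (m - Suc k)" by simp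
      have "real (Suc (m - Suc k)) * N (m - Suc k) \<le> 0"
        using b1[of "m - Suc k"] Suc unfolding e[symmetric] by simp
      moreover have "N (m - Suc k) \<ge> 0" by (simp add: N_def)
      ultimately show ?thesis
        by (simp add: mult_le_0_iff)
    qed
  qed
  have "N 0 = 0" using down[of m] by simp
  then show False by (simp add: N_def)
qed

theorem corollary2p2:
  fixes P :: "'a::{real_normed_algebra, real_algebra_1} set"
  assumes "algebra_cone P"
    and "normal_cone P"
  shows "\<not> (\<exists>a b. (a \<in> P \<or> b \<in> P) \<and> cone_le P 1 (a * b - b * a))"
proof
  assume "\<exists>a b. (a \<in> P \<or> b \<in> P) \<and> cone_le P 1 (a * b - b * a)"
  then obtain a b where h: "a \<in> P \<or> b \<in> P" and c: "a * b - b * a - 1 \<in> P"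
    unfolding cone_le_def by blast
  show False
  proof (cases "a \<in> P")
    case True then show ?thesis using key[OF assms True c] by blast
  next
    case False
    then have "b \<in> P" using h by blast
    moreover have "b * (-a) - (-a) * b - 1 \<in> P" using c by (simp add: algebra_simps)
    ultimately show ?thesis using key[OF assms] by blast
  qed
qed

end
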